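(* A $T_1$-space $X$ has a regular base at non-isolated points if and only if $X$ is a Hausdorff paracompact space with a development at non-isolated points.
   Context: $I(X)$ is the set of isolated points of $X$, $\mathrm{st}(A,\mathcal{W})=\bigcup\{W\in\mathcal{W}:W\cap A\neq\emptyset\}$. A base $\mathcal{B}$ is regular at $x$ if for every neighborhood $U$ of $x$ there is an open $V$ with $x\in V\subset U$ such that $\{B\in\mathcal{B}: B\cap V\neq\emptyset,\ B\not\subset U\}$ is finite; it is a regular base at non-isolated points if it is regular at every $x\in X\setminus I(X)$. A sequence $\{\mathcal{W}_i\}_{i\in\mathbb{N}}$ of open covers of $X$ is a development at non-isolated points if for every $x\in X\setminus I(X)$ and every open neighborhood $U$ of $x$ there are an open neighborhood $V$ of $x$ and $i\in\mathbb{N}$ with $\mathrm{st}(V,\mathcal{W}_i)\subset U$. *)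

theory Defs
  imports "HOL-Analysis.Analysis"
begin

definition isolated_points :: "'a topology \<Rightarrow> 'a set" where
  "isolated_points X = {x \<in> topspace X. openin X {x}}"

definition open_cover_of :: "'a topology \<Rightarrow> 'a set set \<Rightarrow> bool" where
  "open_cover_of X \<U> \<longleftrightarrow> (\<forall>U\<in>\<U>. openin X U) \<and> \<Union>\<U> = topspace X"

definition is_base_of :: "'a topology \<Rightarrow> 'a set set \<Rightarrow> bool" where
  "is_base_of X \<B> \<longleftrightarrow> (\<forall>B\<in>\<B>. openin X B) \<and>
     (\<forall>U x. openin X U \<and> x \<in> U \<longrightarrow> (\<exists>B\<in>\<B>. x \<in> B \<and> B \<subseteq> U))"

text \<open>U ranges over open neighbourhoods of x (equivalent to arbitrary neighbourhoods).\<close>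
definition regular_at :: "'a topology \<Rightarrow> 'a set set \<Rightarrow> 'a \<Rightarrow> bool" where
  "regular_at X \<B> x \<longleftrightarrow>
     (\<forall>U. openin X U \<and> x \<in> U \<longrightarrow>
        (\<exists>V. openin X V \<and> x \<in> V \<and> V \<subseteq> U \<and>
             finite {B \<in> \<B>. B \<inter> V \<noteq> {} \<and> \<not> B \<subseteq> U}))"

definition regular_base_at_nonisolated :: "'a topology \<Rightarrow> 'a set set \<Rightarrow> bool" where
  "regular_base_at_nonisolated X \<B> \<longleftrightarrow>
     is_base_of X \<B> \<and> (\<forall>x \<in> topspace X - isolated_points X. regular_at X \<B> x)"

definition paracompact_space :: "'a topology \<Rightarrow> bool" where
  "paracompact_space X \<longleftrightarrow>
     (\<forall>\<U>. open_cover_of X \<U> \<longrightarrow>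
        (\<exists>\<V>. open_cover_of X \<V> \<and> locally_finite_in X \<V> \<and>
             (\<forall>V\<in>\<V>. \<exists>U\<in>\<U>. V \<subseteq> U)))"

definition star :: "'a set \<Rightarrow> 'a set set \<Rightarrow> 'a set" where
  "star A \<W> = \<Union>{W \<in> \<W>. W \<inter> A \<noteq> {}}"

definition development_at_nonisolated :: "'a topology \<Rightarrow> (nat \<Rightarrow> 'a set set) \<Rightarrow> bool" where
  "development_at_nonisolated X \<W> \<longleftrightarrow>
     (\<forall>i. open_cover_of X (\<W> i)) \<and>
     (\<forall>x \<in> topspace X - isolated_points X. \<forall>U. openin X U \<and> x \<in> U \<longrightarrow>
        (\<exists>V i. openin X V \<and> x \<in> V \<and> star V (\<W> i) \<subseteq> U))"

end

theory Submission
  imports Defs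
begin

lemma openin_minus_finite:
  assumes "t1_space X" "openin X U" "finite Z"
  shows "openin X (U - Z)"
proof -
  have all: "\<forall>S. finite S \<and> S \<subseteq> topspace X \<longrightarrow> closedin X S"
    using assms(1) by (simp only: t1_space_closedin_finite)
  have "closedin X (topspace X \<inter> Z)"
    using all assms(3) by simp
  then have "openin X (U - topspace X \<inter> Z)" using assms(2) openin_diff by metis
  moreover have "U - topspace X \<inter> Z = U - Z" using openin_subset[OF assms(2)] by auto
  ultimately show ?thesis by simp
qed

lemma nonisolated_open_other:
  assumes "openin X B" "x \<in> B" "x \<in> topspace X - isolated_points X"
  shows "\<exists>z\<in>B. z \<noteq> x"
proof -
  have "\<not> openin X {x}" using assms(3) unfolding isolated_points_def by simp
  then have "B \<noteq> {x}" using assms(1) by metis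
  then show ?thesis using assms(2) by blast
qed

lemma regbase_Hausdorff:
  assumes t1: "t1_space X" and R: "regular_base_at_nonisolated X \<B>"
  shows "Hausdorff_space X"
  unfolding Hausdorff_space_def
proof (intro allI impI)
  fix x y assume xy: "x \<in> topspace X \<and> y \<in> topspace X \<and> x \<noteq> y"
  have base: "is_base_of X \<B>" and reg: "\<forall>x \<in> topspace X - isolated_points X. regular_at X \<B> x"
    using R by (auto simp: regular_base_at_nonisolated_def)
  have cl: "closedin X {z}" if "z \<in> topspace X" for z
    using t1 that unfolding t1_space_closedin_singleton by blast
  show "\<exists>U V. openin X U \<and> openin X V \<and> x \<in> U \<and> y \<in> V \<and> disjnt U V"
  proof (cases "x \<in> isolated_points X")
    case True
    then show ?thesis using xy cl[of x]
      by (intro exI[of _ "{x}"] exI[of _ "topspace X - {x}"]) (auto simp: isolated_points_def disjnt_def closedin_def)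
  next
    case xn: False
    show ?thesis
    proof (cases "y \<in> isolated_points X")
      case True
      then show ?thesis using xy cl[of y]
        by (intro exI[of _ "topspace X - {y}"] exI[of _ "{y}"]) (auto simp: isolated_points_def disjnt_def closedin_def)
    next
      case yn: False
      have "regular_at X \<B> x" using reg xy xn by blast
      moreover have "openin X (topspace X - {y})" using cl[of y] xy by (simp add: closedin_def)
      ultimately obtain V where V: "openin X V" "x \<in> V" "V \<subseteq> topspace X - {y}"
        and fin: "finite {B \<in> \<B>. B \<inter> V \<noteq> {} \<and> \<not> B \<subseteq> topspace X - {y}}"
        using xy unfolding regular_at_def by blast
      define F where "F = {B \<in> \<B>. B \<inter> V \<noteq> {} \<and> \<not> B \<subseteq> topspace X - {y}}"
      have Fy: "y \<in> B" if "B \<in> F" for B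
        using that base openin_subset unfolding F_def is_base_of_def by blast
      have "\<forall>B\<in>F. \<exists>z\<in>B. z \<noteq> y"
      proof
        fix B assume "B \<in> F"
        then show "\<exists>z\<in>B. z \<noteq> y"
          using Fy[of B] base yn xy nonisolated_open_other[of X B y]
          unfolding F_def is_base_of_def by blast
      qed
      then obtain g where g: "\<And>B. B \<in> F \<Longrightarrow> g B \<in> B \<and> g B \<noteq> y" by metis
      have "openin X (topspace X - g ` F)"
        using openin_minus_finite[OF t1, of "topspace X" "g ` F"] fin unfolding F_def by auto
      moreover have "y \<in> topspace X - g ` F" using xy g by auto
      ultimately obtain B' where B': "B' \<in> \<B>" "y \<in> B'" "B' \<subseteq> topspace X - g ` F"
        using base unfolding is_base_of_def by blast
      have "B' \<inter> V = {}"
      proof (rule ccontr)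
        assume "B' \<inter> V \<noteq> {}"
        then have "B' \<in> F" using B' unfolding F_def by blast
        then show False using g[of B'] B' by blast
      qed
      then show ?thesis using V B' base unfolding is_base_of_def disjnt_def by blast
    qed
  qed
qed

lemma regbase_paracompact:
  assumes t1: "t1_space X" and R: "regular_base_at_nonisolated X \<B>"
  shows "paracompact_space X"
  unfolding paracompact_space_def
proof (intro allI impI)
  fix \<A> assume A: "open_cover_of X \<A>"
  have Aopen: "\<And>U. U \<in> \<A> \<Longrightarrow> openin X U" and Acov: "\<Union>\<A> = topspace X"
    using A unfolding open_cover_of_def by auto
  have Bopen: "\<And>B. B \<in> \<B> \<Longrightarrow> openin X B"
    and Bbase: "\<And>U x. openin X U \<Longrightarrow> x \<in> U \<Longrightarrow> \<exists>B\<in>\<B>. x \<in> B \<and> B \<subseteq> U"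
    using R unfolding regular_base_at_nonisolated_def is_base_of_def by auto
  have reg: "\<And>x. x \<in> topspace X - isolated_points X \<Longrightarrow> regular_at X \<B> x"
    using R unfolding regular_base_at_nonisolated_def by auto
  define P where "P = {B\<in>\<B>. \<exists>U\<in>\<A>. B \<subseteq> U}"
  define M where "M = {B\<in>P. \<forall>B'\<in>P. B \<subseteq> B' \<longrightarrow> B' = B}"
  define C where "C = {x\<in>topspace X. \<exists>W. openin X W \<and> x\<in>W \<and> finite {m\<in>M. m \<inter> W \<noteq> {}}}"
  define D where "D = \<Union>M \<inter> C"
  define \<R> where "\<R> = (\<lambda>m. m \<inter> C) ` M \<union> (\<lambda>x. {x}) ` (topspace X - D)"
  have MP: "\<And>m. m \<in> M \<Longrightarrow> m \<in> P" unfolding M_def by auto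
  have Mopen: "\<And>m. m \<in> M \<Longrightarrow> openin X m" using MP Bopen unfolding P_def by auto
  have openC: "openin X C"
  proof (subst openin_subopen, intro ballI)
    fix x assume "x \<in> C"
    then obtain W where W: "openin X W" "x\<in>W" "finite {m\<in>M. m \<inter> W \<noteq> {}}"
      unfolding C_def by auto
    have "W \<subseteq> C" using W openin_subset[OF W(1)] unfolding C_def by auto
    then show "\<exists>T. openin X T \<and> x \<in> T \<and> T \<subseteq> C" using W by auto
  qed
  have key: "x \<in> C \<and> x \<in> \<Union>M" if x: "x \<in> topspace X - isolated_points X" for x
  proof -
    obtain U where U: "U \<in> \<A>" "x \<in> U" using x Acov by auto
    obtain B0 where B0: "B0 \<in> \<B>" "x \<in> B0" "B0 \<subseteq> U" using Bbase[OF Aopen[OF U(1)] U(2)] by auto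
    have B0P: "B0 \<in> P" using B0 U unfolding P_def by auto
    obtain V where V: "openin X V" "x \<in> V" "V \<subseteq> B0"
      and fin: "finite {B \<in> \<B>. B \<inter> V \<noteq> {} \<and> \<not> B \<subseteq> B0}"
      using reg[OF x] Bopen[OF B0(1)] B0(2) unfolding regular_at_def by blast
    have "{m\<in>M. m \<inter> V \<noteq> {}} \<subseteq> insert B0 {B \<in> \<B>. B \<inter> V \<noteq> {} \<and> \<not> B \<subseteq> B0}"
    proof
      fix m assume m: "m \<in> {m\<in>M. m \<inter> V \<noteq> {}}"
      then have mM: "m \<in> M" and mV: "m \<inter> V \<noteq> {}" by auto
      have mB: "m \<in> \<B>" using MP[OF mM] unfolding P_def by auto
      show "m \<in> insert B0 {B \<in> \<B>. B \<inter> V \<noteq> {} \<and> \<not> B \<subseteq> B0}"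
      proof (cases "m \<subseteq> B0")
        case True
        then have "B0 = m" using mM B0P unfolding M_def by auto
        then show ?thesis by simp
      qed (use mB mV in auto)
    qed
    then have "finite {m\<in>M. m \<inter> V \<noteq> {}}" using fin finite_subset by auto
    then have xC: "x \<in> C" using V x unfolding C_def by auto
    define S where "S = {B\<in>P. B0 \<subseteq> B}"
    have "S \<subseteq> insert B0 {B \<in> \<B>. B \<inter> V \<noteq> {} \<and> \<not> B \<subseteq> B0}"
    proof
      fix B assume "B \<in> S"
      then have "B \<in> P" "B0 \<subseteq> B" unfolding S_def by auto
      then show "B \<in> insert B0 {B \<in> \<B>. B \<inter> V \<noteq> {} \<and> \<not> B \<subseteq> B0}"
        using V(2) V(3) unfolding P_def by auto
    qed
    then have "finite S" using fin finite_subset by auto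
    moreover have "B0 \<in> S" using B0P unfolding S_def by auto
    ultimately obtain m where m: "m \<in> S" "B0 \<subseteq> m" "\<forall>b\<in>S. m \<subseteq> b \<longrightarrow> m = b"
      using finite_has_maximal2[of S B0] by auto
    have "m \<in> M"
    proof -
      have "m \<in> P" using m(1) unfolding S_def by auto
      moreover have "\<forall>B'\<in>P. m \<subseteq> B' \<longrightarrow> B' = m"
      proof (intro ballI impI)
        fix B' assume "B' \<in> P" "m \<subseteq> B'"
        then have "B' \<in> S" using m(2) unfolding S_def by auto
        then show "B' = m" using m(3) \<open>m \<subseteq> B'\<close> by auto
      qed
      ultimately show ?thesis unfolding M_def by auto
    qed
    then have "x \<in> \<Union>M" using m(2) B0(2) by auto
    then show ?thesis using xC by auto
  qed
  have Ctop: "C \<subseteq> topspace X" unfolding C_def by auto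
  have notD_iso: "openin X {x}" if "x \<in> topspace X" "x \<notin> D" for x
  proof (rule ccontr)
    assume "\<not> openin X {x}"
    then have "x \<in> topspace X - isolated_points X" using that(1) unfolding isolated_points_def by auto
    then have "x \<in> D" using key unfolding D_def by auto
    then show False using that(2) by auto
  qed
  have openD: "openin X D" unfolding D_def using Mopen openC by auto
  have Ropen: "\<forall>r\<in>\<R>. openin X r"
  proof
    fix r assume "r \<in> \<R>"
    then consider m where "m \<in> M" "r = m \<inter> C" | x where "x \<in> topspace X" "x \<notin> D" "r = {x}"
      unfolding \<R>_def by auto
    then show "openin X r"
    proof cases
      case 1 then show ?thesis using Mopen openC by auto
    next
      case 2 then show ?thesis using notD_iso by auto
    qed
  qed
  have Runion: "\<Union>\<R> = topspace X"
  proof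
    show "\<Union>\<R> \<subseteq> topspace X" using Ctop unfolding \<R>_def by auto
    show "topspace X \<subseteq> \<Union>\<R>"
    proof
      fix x assume x: "x \<in> topspace X"
      show "x \<in> \<Union>\<R>"
      proof (cases "x \<in> D")
        case True
        then obtain m where "m \<in> M" "x \<in> m" "x \<in> C" unfolding D_def by auto
        then show ?thesis unfolding \<R>_def by auto
      next
        case False
        then show ?thesis using x unfolding \<R>_def by auto
      qed
    qed
  qed
  have Rlf: "locally_finite_in X \<R>"
    unfolding locally_finite_in_def
  proof (intro conjI ballI)
    show "\<Union>\<R> \<subseteq> topspace X" using Runion by simp
    fix x assume x: "x \<in> topspace X"
    show "\<exists>V. openin X V \<and> x \<in> V \<and> finite {U \<in> \<R>. U \<inter> V \<noteq> {}}"
    proof (cases "x \<in> D")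
      case True
      then have "x \<in> C" unfolding D_def by auto
      then obtain W where W: "openin X W" "x\<in>W" "finite {m\<in>M. m \<inter> W \<noteq> {}}"
        unfolding C_def by auto
      have "{U \<in> \<R>. U \<inter> (W \<inter> D) \<noteq> {}} \<subseteq> (\<lambda>m. m \<inter> C) ` {m\<in>M. m \<inter> W \<noteq> {}}"
        unfolding \<R>_def by auto
      then have "finite {U \<in> \<R>. U \<inter> (W \<inter> D) \<noteq> {}}"
        using W(3) finite_subset by blast
      moreover have "openin X (W \<inter> D)" using W(1) openD by auto
      ultimately show ?thesis using W(2) True by blast
    next
      case False
      have "{U \<in> \<R>. U \<inter> {x} \<noteq> {}} \<subseteq> {{x}}"
        using False unfolding \<R>_def D_def by auto
      then have "finite {U \<in> \<R>. U \<inter> {x} \<noteq> {}}" using finite_subset by auto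
      then show ?thesis using notD_iso[OF x False] by blast
    qed
  qed
  have Rref: "\<forall>V\<in>\<R>. \<exists>U\<in>\<A>. V \<subseteq> U"
  proof
    fix r assume "r \<in> \<R>"
    then consider m where "m \<in> M" "r = m \<inter> C" | x where "x \<in> topspace X" "r = {x}"
      unfolding \<R>_def by auto
    then show "\<exists>U\<in>\<A>. r \<subseteq> U"
    proof cases
      case 1
      then obtain U where "U \<in> \<A>" "m \<subseteq> U" using MP unfolding P_def by blast
      then show ?thesis using 1 by auto
    next
      case 2 then show ?thesis using Acov by auto
    qed
  qed
  show "\<exists>\<V>. open_cover_of X \<V> \<and> locally_finite_in X \<V> \<and> (\<forall>V\<in>\<V>. \<exists>U\<in>\<A>. V \<subseteq> U)"
    using Ropen Runion Rlf Rref unfolding open_cover_of_def by blast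
qed

lemma regbase_development:
  assumes t1: "t1_space X" and R: "regular_base_at_nonisolated X \<B>"
  shows "\<exists>\<W>. development_at_nonisolated X \<W>"
proof -
  have Bopen: "\<And>B. B \<in> \<B> \<Longrightarrow> openin X B"
    and Bbase: "\<And>U x. openin X U \<Longrightarrow> x \<in> U \<Longrightarrow> \<exists>B\<in>\<B>. x \<in> B \<and> B \<subseteq> U"
    using R unfolding regular_base_at_nonisolated_def is_base_of_def by auto
  have reg: "\<And>x. x \<in> topspace X - isolated_points X \<Longrightarrow> regular_at X \<B> x"
    using R unfolding regular_base_at_nonisolated_def by auto
  define h where "h B = {B'\<in>\<B>. B \<subset> B'}" for B
  define \<W> where "\<W> n = {B\<in>\<B>. finite (h B) \<and> n \<le> card (h B)} \<union> (\<lambda>x. {x}) ` isolated_points X" for n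
  have finh: "finite (h B)" if x: "x \<in> topspace X - isolated_points X" and B: "B \<in> \<B>" "x \<in> B" for x B
  proof -
    obtain V where V: "openin X V" "x \<in> V" "V \<subseteq> B"
      and fin: "finite {B' \<in> \<B>. B' \<inter> V \<noteq> {} \<and> \<not> B' \<subseteq> B}"
      using reg[OF x] Bopen[OF B(1)] B(2) unfolding regular_at_def by blast
    have "h B \<subseteq> {B' \<in> \<B>. B' \<inter> V \<noteq> {} \<and> \<not> B' \<subseteq> B}"
      using V(2) V(3) unfolding h_def by auto
    then show ?thesis using fin finite_subset by auto
  qed
  have height: "\<exists>B\<in>\<B>. x \<in> B \<and> n \<le> card (h B)" if x: "x \<in> topspace X - isolated_points X" for x n
  proof (induction n)
    case 0
    then show ?case using Bbase[OF openin_topspace, of x] x by auto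
  next
    case (Suc n)
    then obtain B where B: "B \<in> \<B>" "x \<in> B" "n \<le> card (h B)" by auto
    obtain z where z: "z \<in> B" "z \<noteq> x" using nonisolated_open_other[OF Bopen[OF B(1)] B(2) x] by auto
    have "openin X (B - {z})" using openin_minus_finite[OF t1 Bopen[OF B(1)]] by auto
    moreover have "x \<in> B - {z}" using B z by auto
    ultimately obtain B' where B': "B' \<in> \<B>" "x \<in> B'" "B' \<subseteq> B - {z}" using Bbase by blast
    have sub: "insert B (h B) \<subseteq> h B'" using B' B z unfolding h_def by auto
    have notin: "B \<notin> h B" unfolding h_def by auto
    have "card (insert B (h B)) = Suc (card (h B))" using finh[OF x B(1) B(2)] notin by simp
    moreover have "card (insert B (h B)) \<le> card (h B')"
      using card_mono[OF finh[OF x B'(1) B'(2)] sub] .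
    ultimately have "Suc n \<le> card (h B')" using B(3) by simp
    then show ?case using B' by auto
  qed
  have cover: "open_cover_of X (\<W> n)" for n
    unfolding open_cover_of_def
  proof (intro conjI ballI)
    fix U assume "U \<in> \<W> n"
    then consider "U \<in> \<B>" | x where "x \<in> isolated_points X" "U = {x}" unfolding \<W>_def by auto
    then show "openin X U"
    proof cases
      case 1 then show ?thesis using Bopen by auto
    next
      case 2 then show ?thesis unfolding isolated_points_def by auto
    qed
  next
    show "\<Union>(\<W> n) = topspace X"
    proof
      show "\<Union>(\<W> n) \<subseteq> topspace X"
      proof
        fix y assume "y \<in> \<Union>(\<W> n)"
        then obtain U where U: "U \<in> \<W> n" "y \<in> U" by auto
        then consider "U \<in> \<B>" | x where "x \<in> isolated_points X" "U = {x}" unfolding \<W>_def by auto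
        then show "y \<in> topspace X"
        proof cases
          case 1 then show ?thesis using Bopen[OF 1] openin_subset U(2) by blast
        next
          case 2 then show ?thesis using U(2) unfolding isolated_points_def by auto
        qed
      qed
      show "topspace X \<subseteq> \<Union>(\<W> n)"
      proof
        fix x assume x: "x \<in> topspace X"
        show "x \<in> \<Union>(\<W> n)"
        proof (cases "x \<in> isolated_points X")
          case True then show ?thesis unfolding \<W>_def by auto
        next
          case False
          then have xn: "x \<in> topspace X - isolated_points X" using x by auto
          obtain B where B: "B \<in> \<B>" "x \<in> B" "n \<le> card (h B)" using height[OF xn] by blast
          have "B \<in> \<W> n" using B finh[OF xn B(1) B(2)] unfolding \<W>_def by auto
          then show ?thesis using B(2) by auto
        qed
      qed
    qed
  qed
  have dev: "\<exists>V i. openin X V \<and> x \<in> V \<and> star V (\<W> i) \<subseteq> U"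
    if x: "x \<in> topspace X - isolated_points X" and U: "openin X U" "x \<in> U" for x U
  proof -
    obtain V where V: "openin X V" "x \<in> V" "V \<subseteq> U"
      and fin: "finite {B \<in> \<B>. B \<inter> V \<noteq> {} \<and> \<not> B \<subseteq> U}"
      using reg[OF x] U unfolding regular_at_def by blast
    define F where "F = {B \<in> \<B>. B \<inter> V \<noteq> {} \<and> \<not> B \<subseteq> U}"
    define n where "n = Suc (\<Sum>B\<in>F. card (h B))"
    have "star V (\<W> n) \<subseteq> U"
    proof
      fix y assume "y \<in> star V (\<W> n)"
      then obtain w where w: "w \<in> \<W> n" "w \<inter> V \<noteq> {}" "y \<in> w" unfolding star_def by auto
      then consider "w \<in> \<B>" "n \<le> card (h w)" | z where "w = {z}" unfolding \<W>_def by auto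
      then show "y \<in> U"
      proof cases
        case 1
        show ?thesis
        proof (rule ccontr)
          assume "y \<notin> U"
          then have "w \<in> F" using 1 w unfolding F_def by auto
          then have "card (h w) \<le> (\<Sum>B\<in>F. card (h B))"
            using fin unfolding F_def[symmetric] by (intro member_le_sum) auto
          then show False using 1(2) unfolding n_def by simp
        qed
      next
        case 2 then show ?thesis using w V(3) by auto
      qed
    qed
    then show ?thesis using V by blast
  qed
  have "development_at_nonisolated X \<W>"
    unfolding development_at_nonisolated_def using cover dev by blast
  then show ?thesis by blast
qed

lemma dev_regbase:
  assumes P: "paracompact_space X" and D: "development_at_nonisolated X \<W>"
  shows "\<exists>\<B>. regular_base_at_nonisolated X \<B>"
proof -
  have Wcov: "\<And>i. open_cover_of X (\<W> i)" using D unfolding development_at_nonisolated_def by auto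
  have Wopen: "\<And>i w. w \<in> \<W> i \<Longrightarrow> openin X w" and Wun: "\<And>i. \<Union>(\<W> i) = topspace X"
    using Wcov unfolding open_cover_of_def by auto
  have Wdev: "\<And>x U. x \<in> topspace X - isolated_points X \<Longrightarrow> openin X U \<Longrightarrow> x \<in> U \<Longrightarrow>
      \<exists>V i. openin X V \<and> x \<in> V \<and> star V (\<W> i) \<subseteq> U"
    using D unfolding development_at_nonisolated_def by blast
  define Cn where "Cn n = {A. openin X A \<and> (\<forall>k\<le>n. \<exists>w\<in>\<W> k. A \<subseteq> w)}" for n
  have Ccov: "open_cover_of X (Cn n)" for n
    unfolding open_cover_of_def
  proof (intro conjI ballI)
    show "\<And>U. U \<in> Cn n \<Longrightarrow> openin X U" unfolding Cn_def by auto
    show "\<Union>(Cn n) = topspace X"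
    proof
      show "\<Union>(Cn n) \<subseteq> topspace X" unfolding Cn_def using openin_subset by auto
      show "topspace X \<subseteq> \<Union>(Cn n)"
      proof
        fix x assume x: "x \<in> topspace X"
        have "\<forall>k. \<exists>w. w \<in> \<W> k \<and> x \<in> w" using x Wun by blast
        then obtain f where f: "\<And>k. f k \<in> \<W> k \<and> x \<in> f k" by metis
        define A where "A = (\<Inter>k\<in>{..n}. f k) \<inter> topspace X"
        have "openin X A" unfolding A_def using f Wopen by (intro openin_INT) auto
        moreover have "\<forall>k\<le>n. \<exists>w\<in>\<W> k. A \<subseteq> w"
          using f unfolding A_def by blast
        moreover have "x \<in> A" using f x unfolding A_def by auto
        ultimately show "x \<in> \<Union>(Cn n)" unfolding Cn_def by auto
      qed
    qed
  qed
  have "\<forall>n. \<exists>L. open_cover_of X L \<and> locally_finite_in X L \<and> (\<forall>V\<in>L. \<exists>U\<in>Cn n. V \<subseteq> U)"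
    using P Ccov unfolding paracompact_space_def by blast
  then obtain L where L: "\<And>n. open_cover_of X (L n)" "\<And>n. locally_finite_in X (L n)"
    "\<And>n. \<forall>V\<in>L n. \<exists>U\<in>Cn n. V \<subseteq> U" by metis
  have Lopen: "\<And>n l. l \<in> L n \<Longrightarrow> openin X l" and Lun: "\<And>n. \<Union>(L n) = topspace X"
    using L(1) unfolding open_cover_of_def by auto
  have K: "l \<subseteq> U" if V0: "star V0 (\<W> i) \<subseteq> U" and n: "i \<le> n" and l: "l \<in> L n" "l \<inter> V0 \<noteq> {}"
    for V0 i U n l
  proof -
    obtain c where c: "c \<in> Cn n" "l \<subseteq> c" using L(3) l by blast
    obtain w where w: "w \<in> \<W> i" "c \<subseteq> w" using c n unfolding Cn_def by blast
    have "w \<inter> V0 \<noteq> {}" using w c l by auto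
    then have "w \<subseteq> star V0 (\<W> i)" using w unfolding star_def by auto
    then show ?thesis using c w V0 by auto
  qed
  have V0U: "V0 \<subseteq> U" if "star V0 (\<W> i) \<subseteq> U" "openin X V0" for V0 i U
  proof
    fix y assume y: "y \<in> V0"
    then have "y \<in> topspace X" using that(2) openin_subset by auto
    then obtain w where "w \<in> \<W> i" "y \<in> w" using Wun[of i] by auto
    then have "y \<in> star V0 (\<W> i)" using y unfolding star_def by auto
    then show "y \<in> U" using that(1) by auto
  qed
  define \<B> where "\<B> = (\<Union>n. L n) \<union> (\<lambda>x. {x}) ` isolated_points X"
  have Bopen: "\<forall>B\<in>\<B>. openin X B"
    unfolding \<B>_def isolated_points_def using Lopen by auto
  have base: "is_base_of X \<B>"
    unfolding is_base_of_def
  proof (intro conjI allI impI)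
    show "\<forall>B\<in>\<B>. openin X B" by (rule Bopen)
    fix U x assume Ux: "openin X U \<and> x \<in> U"
    show "\<exists>B\<in>\<B>. x \<in> B \<and> B \<subseteq> U"
    proof (cases "x \<in> isolated_points X")
      case True
      then show ?thesis using Ux unfolding \<B>_def by auto
    next
      case False
      then have xn: "x \<in> topspace X - isolated_points X" using Ux openin_subset by auto
      obtain V0 i where V0: "openin X V0" "x \<in> V0" "star V0 (\<W> i) \<subseteq> U"
        using Wdev[OF xn] Ux by blast
      obtain l where l: "l \<in> L i" "x \<in> l" using Lun[of i] xn by auto
      have "l \<subseteq> U" using K[OF V0(3) order_refl l(1)] l(2) V0(2) by auto
      then show ?thesis using l unfolding \<B>_def by auto
    qed
  qed
  have regx: "regular_at X \<B> x" if xn: "x \<in> topspace X - isolated_points X" for x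
    unfolding regular_at_def
  proof (intro allI impI)
    fix U assume Ux: "openin X U \<and> x \<in> U"
    obtain V0 i where V0: "openin X V0" "x \<in> V0" "star V0 (\<W> i) \<subseteq> U"
      using Wdev[OF xn] Ux by blast
    have "\<forall>n. \<exists>G. openin X G \<and> x \<in> G \<and> finite {l \<in> L n. l \<inter> G \<noteq> {}}"
      using L(2) xn unfolding locally_finite_in_def by blast
    then obtain g where g: "\<And>n. openin X (g n) \<and> x \<in> g n \<and> finite {l \<in> L n. l \<inter> g n \<noteq> {}}"
      by metis
    define V where "V = V0 \<inter> ((\<Inter>n\<in>{..<i}. g n) \<inter> topspace X)"
    have Vo: "openin X V" unfolding V_def using V0(1) g by (intro openin_Int openin_INT) auto
    have xV: "x \<in> V" unfolding V_def using V0 g xn by auto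
    have VU: "V \<subseteq> U" using V0U[OF V0(3) V0(1)] unfolding V_def by auto
    have "{B \<in> \<B>. B \<inter> V \<noteq> {} \<and> \<not> B \<subseteq> U} \<subseteq> (\<Union>n\<in>{..<i}. {l \<in> L n. l \<inter> g n \<noteq> {}})"
    proof
      fix B assume B: "B \<in> {B \<in> \<B>. B \<inter> V \<noteq> {} \<and> \<not> B \<subseteq> U}"
      then have BB: "B \<in> \<B>" and BV: "B \<inter> V \<noteq> {}" and BU: "\<not> B \<subseteq> U" by auto
      then consider n where "B \<in> L n" | z where "B = {z}" unfolding \<B>_def by auto
      then show "B \<in> (\<Union>n\<in>{..<i}. {l \<in> L n. l \<inter> g n \<noteq> {}})"
      proof cases
        case 1
        have "\<not> i \<le> n"
        proof
          assume "i \<le> n"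
          moreover have "B \<inter> V0 \<noteq> {}" using BV unfolding V_def by auto
          ultimately have "B \<subseteq> U" using K[OF V0(3) _ 1] by auto
          then show False using BU by auto
        qed
        then have "n < i" by simp
        moreover have "B \<inter> g n \<noteq> {}" using BV \<open>n < i\<close> unfolding V_def by auto
        ultimately show ?thesis using 1 by auto
      next
        case 2
        then show ?thesis using BV BU VU by auto
      qed
    qed
    moreover have "finite (\<Union>n\<in>{..<i}. {l \<in> L n. l \<inter> g n \<noteq> {}})" using g by auto
    ultimately have "finite {B \<in> \<B>. B \<inter> V \<noteq> {} \<and> \<not> B \<subseteq> U}" using finite_subset by blast
    then show "\<exists>V. openin X V \<and> x \<in> V \<and> V \<subseteq> U \<and> finite {B \<in> \<B>. B \<inter> V \<noteq> {} \<and> \<not> B \<subseteq> U}"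
      using Vo xV VU by blast
  qed
  show ?thesis unfolding regular_base_at_nonisolated_def using base regx by blast
qed

theorem mainTheorem6:
  fixes X :: "'a topology"
  assumes "t1_space X"
  shows "(\<exists>\<B>. regular_base_at_nonisolated X \<B>) \<longleftrightarrow>
         (Hausdorff_space X \<and> paracompact_space X \<and>
          (\<exists>\<W>. development_at_nonisolated X \<W>))"
  using regbase_Hausdorff[OF assms] regbase_paracompact[OF assms] regbase_development[OF assms]
    dev_regbase by blast

end
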